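(* For every ordered forest $\mathcal F$ let $S'^{\mathcal F}(A')$ be the sum of all $\mathcal F$-compatible words over $A'$ (in the sense below). Then for all ordered forests $\mathcal F,\mathcal G$, $S'^{\mathcal F}S'^{\mathcal G}=S'^{\mathcal F\mathcal G}$, and, letting letters of $A'$ commute with letters of $B'$, $$S'^{\mathcal F}(A'\oplus B')=\sum_{V}S'^{\mathrm{Roo}_V\mathcal F}(A')\,S'^{\mathrm{Lea}_V\mathcal F}(B'),$$ the sum over admissible cuts $V$ of $\mathcal F$. Hence $\mathcal F\mapsto S'^{\mathcal F}$ is compatible with the product and coproduct of $\mathbf H_o$.
   Context: An ordered forest on $n$ vertices ($n\ge 0$) is a rooted forest whose vertex set is $[n]=\{1,\dots,n\}$ with its natural total order (the labels need not be related to the tree structure); it is determined by its set of roots and the parent map $p$ on non-root vertices. A vertex $w$ is a descendant of $v$ if $v$ is obtained from $w$ by applying $p$ at least once. For $I\subseteq[n]$ with $|I|=k$, the restriction $\mathcal F_{|I}$ is the ordered forest on $[k]$ obtained by keeping the vertices in $I$ and the edges of $\mathcal F$ between two vertices of $I$ (a vertex of $I$ whose parent is not in $I$ becomes a root), relabelled via the unique increasing bijection $I\to[k]$. An admissible cut of $\mathcal F$ is a subset $V\subseteq[n]$ (possibly empty) containing no two distinct vertices one of which is a descendant of the other. For such $V$, let $L_V$ be the set of vertices lying in $V$ or descending from an element of $V$, and set $\mathrm{Lea}_V\mathcal F=\mathcal F_{|L_V}$, $\mathrm{Roo}_V\mathcal F=\mathcal F_{|[n]\setminus L_V}$. For ordered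 forests $\mathcal F$ on $[n]$ and $\mathcal G$ on $[m]$, $\mathcal F\mathcal G$ is the ordered forest on $[n+m]$ which is the disjoint union of $\mathcal F$ and of $\mathcal G$ with labels shifted by $n$. $\mathbf H_o$ is the vector space with basis the ordered forests, product extending $\mathcal F\mathcal G$, coproduct $\Delta(\mathcal F)=\sum_{V}\mathrm{Roo}_V\mathcal F\otimes\mathrm{Lea}_V\mathcal F$. Second realization: $A'=\{a_{ij}: 1\le i\le j\}$ with relation $a_{hi}\prec a_{ij}$ whenever $h\le i<j$ (and no other relations). A word $w=w_1\cdots w_n$ over $A'$ is $\mathcal F$-compatible if (a) for each root $k$ of $\mathcal F$, $w_k$ is a diagonal letter $a_{ii}$ for some $i$, and (b) $w_k\prec w_l$ whenever $k$ is the parent of $l$. With $B'=\{b_{ij}:1\le i\le j\}$ a disjoint copy of $A'$, $A'\oplus B'$ is the disjoint union with the relations of $A'$ and of $B'$, together with $a\prec b_{ii}$ for all $a\in A'$ and all $i\ge1$; $\mathcal F$-compatible words over $A'\oplus B'$ are defined by (a) (diagonal letters $a_{ii}$ or $b_{ii}$ at roots) and (b) with this extended relation. *)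

theory Defs
  imports Main
begin

text \<open>An ordered forest on [n] is represented as a pair (n, p) where p is the parent map:
  p k = None for roots and for all k outside {1..n}; p k = Some q with q the parent of k.\<close>

type_synonym oforest = "nat \<times> (nat \<Rightarrow> nat option)"

definition edges :: "(nat \<Rightarrow> nat option) \<Rightarrow> (nat \<times> nat) set" where
  "edges p = {(w, v). p w = Some v}"

definition descendant :: "oforest \<Rightarrow> nat \<Rightarrow> nat \<Rightarrow> bool" where
  "descendant F w v \<longleftrightarrow> (w, v) \<in> (edges (snd F))\<^sup>+"

definition wf_forest :: "oforest \<Rightarrow> bool" where
  "wf_forest F \<longleftrightarrow>
     (\<forall>k. k \<notin> {1..fst F} \<longrightarrow> snd F k = None) \<and>
     (\<forall>k q. snd F k = Some q \<longrightarrow> q \<in> {1..fst F}) \<and>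
     (\<forall>k. \<not> descendant F k k)"

text \<open>Increasing bijection I -> [card I]: rank, and its inverse.\<close>
definition rank :: "nat set \<Rightarrow> nat \<Rightarrow> nat" where
  "rank I q = card {x \<in> I. x \<le> q}"

definition elem_at :: "nat set \<Rightarrow> nat \<Rightarrow> nat" where
  "elem_at I j = sorted_list_of_set I ! (j - 1)"

definition restr :: "oforest \<Rightarrow> nat set \<Rightarrow> oforest" where
  "restr F I = (card I, (\<lambda>j. if 1 \<le> j \<and> j \<le> card I then
       (case snd F (elem_at I j) of
          None \<Rightarrow> None
        | Some q \<Rightarrow> if q \<in> I then Some (rank I q) else None)
     else None))"

definition admissible_cut :: "oforest \<Rightarrow> nat set \<Rightarrow> bool" where
  "admissible_cut F V \<longleftrightarrow> V \<subseteq> {1..fst F} \<and>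
     (\<forall>v\<in>V. \<forall>w\<in>V. v \<noteq> w \<longrightarrow> \<not> descendant F w v)"

definition LV :: "oforest \<Rightarrow> nat set \<Rightarrow> nat set" where
  "LV F V = V \<union> {w. \<exists>v\<in>V. descendant F w v}"

definition Lea :: "oforest \<Rightarrow> nat set \<Rightarrow> oforest" where
  "Lea F V = restr F (LV F V)"

definition Roo :: "oforest \<Rightarrow> nat set \<Rightarrow> oforest" where
  "Roo F V = restr F ({1..fst F} - LV F V)"

definition fprod :: "oforest \<Rightarrow> oforest \<Rightarrow> oforest" where
  "fprod F G = (fst F + fst G,
     (\<lambda>k. if k \<le> fst F then snd F k else map_option (\<lambda>x. x + fst F) (snd G (k - fst F))))"

text \<open>Alphabet A': letters a_ij = (i,j) with 1 <= i <= j.\<close>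
definition letterA :: "nat \<times> nat \<Rightarrow> bool" where
  "letterA x \<longleftrightarrow> 1 \<le> fst x \<and> fst x \<le> snd x"

definition diagA :: "nat \<times> nat \<Rightarrow> bool" where
  "diagA x \<longleftrightarrow> fst x = snd x"

definition precA :: "nat \<times> nat \<Rightarrow> nat \<times> nat \<Rightarrow> bool" where
  "precA x y \<longleftrightarrow> snd x = fst y \<and> fst x \<le> snd x \<and> fst y < snd y"

text \<open>A' (+) B': Inl = letters of A', Inr = letters of B'.\<close>
fun letterAB :: "(nat \<times> nat) + (nat \<times> nat) \<Rightarrow> bool" where
  "letterAB (Inl x) = letterA x"
| "letterAB (Inr x) = letterA x"

fun diagAB :: "(nat \<times> nat) + (nat \<times> nat) \<Rightarrow> bool" where
  "diagAB (Inl x) = diagA x"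
| "diagAB (Inr x) = diagA x"

fun precAB :: "(nat \<times> nat) + (nat \<times> nat) \<Rightarrow> (nat \<times> nat) + (nat \<times> nat) \<Rightarrow> bool" where
  "precAB (Inl x) (Inl y) = precA x y"
| "precAB (Inr x) (Inr y) = precA x y"
| "precAB (Inl x) (Inr y) = diagA y"
| "precAB (Inr x) (Inl y) = False"

text \<open>F-compatible words (positions 1..n correspond to list indices 0..n-1).\<close>
definition compatible ::
  "('l \<Rightarrow> bool) \<Rightarrow> ('l \<Rightarrow> bool) \<Rightarrow> ('l \<Rightarrow> 'l \<Rightarrow> bool) \<Rightarrow> oforest \<Rightarrow> 'l list \<Rightarrow> bool" where
  "compatible letter diag prec F w \<longleftrightarrow>
     length w = fst F \<and> (\<forall>x\<in>set w. letter x) \<and>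
     (\<forall>k\<in>{1..fst F}. snd F k = None \<longrightarrow> diag (w ! (k - 1))) \<and>
     (\<forall>k l. l \<in> {1..fst F} \<longrightarrow> snd F l = Some k \<longrightarrow> prec (w ! (k - 1)) (w ! (l - 1)))"

text \<open>Formal series in noncommuting variables: coefficient functions on words.\<close>
type_synonym 'l series = "'l list \<Rightarrow> nat"

definition ser_mult :: "'l series \<Rightarrow> 'l series \<Rightarrow> 'l series" where
  "ser_mult f g w = (\<Sum>k\<le>length w. f (take k w) * g (drop k w))"

definition SA :: "oforest \<Rightarrow> (nat \<times> nat) series" where
  "SA F w = (if compatible letterA diagA precA F w then 1 else 0)"

definition SAB :: "oforest \<Rightarrow> ((nat \<times> nat) + (nat \<times> nat)) series" where
  "SAB F w = (if compatible letterAB diagAB precAB F w then 1 else 0)"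

end

theory Submission
  imports Defs
begin

lemma rank_bounds:
  assumes "finite I" "k \<in> I" shows "1 \<le> rank I k" "rank I k \<le> card I"
proof -
  have "k \<in> {x \<in> I. x \<le> k}" using assms by auto
  then show "1 \<le> rank I k" unfolding rank_def using assms
    by (metis (no_types, lifting) One_nat_def Suc_leI card_gt_0_iff empty_iff finite_subset mem_Collect_eq subsetI)
  show "rank I k \<le> card I" unfolding rank_def using assms by (intro card_mono) auto
qed

lemma rank_inj: assumes "finite I" shows "inj_on (rank I) I"
proof (rule inj_onI)
  have *: "rank I x < rank I y" if "x \<in> I" "y \<in> I" "x < y" for x y
  proof -
    have "y \<notin> {z \<in> I. z \<le> x}" "y \<in> {z \<in> I. z \<le> y}" using that by auto
    moreover have "{z \<in> I. z \<le> x} \<subseteq> {z \<in> I. z \<le> y}" using that by auto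
    ultimately have "{z \<in> I. z \<le> x} \<subset> {z \<in> I. z \<le> y}" by blast
    then show ?thesis unfolding rank_def using assms by (intro psubset_card_mono) auto
  qed
  fix x y assume "x \<in> I" "y \<in> I" "rank I x = rank I y"
  then show "x = y" using *[of x y] *[of y x] by (metis less_irrefl nat_neq_iff)
qed

lemma rank_image: assumes "finite I" shows "rank I ` I = {1..card I}"
proof -
  have "rank I ` I \<subseteq> {1..card I}" using rank_bounds[OF assms] by auto
  moreover have "card (rank I ` I) = card {1..card I}"
    using card_image[OF rank_inj[OF assms]] by simp
  ultimately show ?thesis by (simp add: card_subset_eq)
qed

lemma elem_at_rank: assumes "finite I" "k \<in> I" shows "elem_at I (rank I k) = k"
proof -
  define s where "s = sorted_list_of_set I"
  have ss: "sorted_wrt (<) s" and st: "set s = I" and ls: "length s = card I"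
    using assms by (auto simp: s_def)
  obtain i where i: "i < length s" "s ! i = k" using st assms by (metis in_set_conv_nth)
  have lt: "s ! a < s ! b \<longleftrightarrow> a < b" if "a < length s" "b < length s" for a b
    using sorted_wrt_nth_less[OF ss] that by (metis less_asym linorder_neqE_nat)
  have "{x \<in> I. x \<le> k} = (\<lambda>j. s ! j) ` {..i}"
  proof (intro equalityI subsetI)
    fix x assume "x \<in> {x \<in> I. x \<le> k}"
    then have "x \<in> I" "x \<le> k" by auto
    then obtain j where "j < length s" "s ! j = x" using st by (metis in_set_conv_nth)
    then show "x \<in> (\<lambda>j. s ! j) ` {..i}" using lt[of i j] i \<open>x \<le> k\<close> by force
  next
    fix x assume "x \<in> (\<lambda>j. s ! j) ` {..i}"
    then obtain j where j: "j \<le> i" "x = s ! j" by auto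
    then have jl: "j < length s" using i by auto
    then have "s ! j \<in> I" using st nth_mem by blast
    moreover have "s ! j \<le> k" using i lt[of j i] j jl
      by (cases "j = i") auto
    ultimately show "x \<in> {x \<in> I. x \<le> k}" using j by auto
  qed
  moreover have "inj_on (\<lambda>j. s ! j) {..i}"
    using i lt by (intro inj_onI) (metis atMost_iff le_less_trans less_irrefl_nat linorder_neqE_nat order.strict_trans1 order_le_less_trans)
  ultimately have "rank I k = Suc i" unfolding rank_def by (simp add: card_image)
  then show ?thesis unfolding elem_at_def s_def[symmetric] using i by simp
qed


definition posset :: "('a \<Rightarrow> bool) \<Rightarrow> 'a list \<Rightarrow> nat set" where
  "posset Q w = {k. 1 \<le> k \<and> k \<le> length w \<and> Q (w ! (k - 1))}"

lemma posset_Suc: "posset Q w = Suc ` {j. j < length w \<and> Q (w ! j)}"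
  unfolding posset_def
proof (intro equalityI subsetI)
  fix k assume "k \<in> {k. 1 \<le> k \<and> k \<le> length w \<and> Q (w ! (k - 1))}"
  then show "k \<in> Suc ` {j. j < length w \<and> Q (w ! j)}" by (intro image_eqI[where x="k-1"]) auto
next
  fix k assume "k \<in> Suc ` {j. j < length w \<and> Q (w ! j)}"
  then show "k \<in> {k. 1 \<le> k \<and> k \<le> length w \<and> Q (w ! (k - 1))}" by auto
qed

lemma finite_posset[simp]: "finite (posset Q w)"
  unfolding posset_def by (rule finite_subset[of _ "{1..length w}"]) auto

lemma length_filter_posset: "length (filter Q w) = card (posset Q w)"
  by (simp add: posset_Suc card_image length_filter_conv_card)

lemma nth_filter_posset:
  assumes "k \<in> posset Q w"
  shows "filter Q w ! (rank (posset Q w) k - 1) = w ! (k - 1)"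
proof -
  define i where "i = k - 1"
  have k: "k = Suc i" "i < length w" "Q (w ! i)" using assms by (auto simp: posset_def i_def)
  define Z where "Z = {j. j < length w \<and> Q (w ! j)}"
  have "{x \<in> posset Q w. x \<le> k} = Suc ` ({j \<in> Z. j < i} \<union> {i})"
    unfolding posset_Suc Z_def[symmetric] using k by (auto simp: Z_def)
  then have r: "rank (posset Q w) k = Suc (card {j \<in> Z. j < i})"
  proof -
    have f: "finite {j \<in> Z. j < i}" by (rule finite_subset[of _ "{..<i}"]) auto
    have "card (Suc ` ({j \<in> Z. j < i} \<union> {i})) = Suc (card {j \<in> Z. j < i})"
      using f by (simp, subst card_insert_disjoint) (auto simp: card_image)
    then show ?thesis unfolding rank_def using \<open>{x \<in> posset Q w. x \<le> k} = _\<close> by simp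
  qed
  have lt: "length (filter Q (take i w)) = card {j \<in> Z. j < i}"
    unfolding length_filter_conv_card Z_def using k by (intro arg_cong[where f=card]) auto
  have "w = take i w @ w ! i # drop (Suc i) w" using k by (simp add: id_take_nth_drop)
  then have "filter Q w = filter Q (take i w) @ w ! i # filter Q (drop (Suc i) w)"
    using k by (metis filter.simps(2) filter_append)
  then show ?thesis using r lt k by (simp add: nth_append)
qed

lemma restr_snd:
  assumes "finite I" "k \<in> I"
  shows "snd (restr F I) (rank I k) = (case snd F k of None \<Rightarrow> None
        | Some q \<Rightarrow> if q \<in> I then Some (rank I q) else None)"
  using rank_bounds[OF assms] elem_at_rank[OF assms] by (simp add: restr_def)

lemma compat_restr:
  assumes "finite I"
  shows "compatible letter diag prec (restr F I) x \<longleftrightarrow>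
     length x = card I \<and> (\<forall>k\<in>I. letter (x ! (rank I k - 1))) \<and>
     (\<forall>k\<in>I. (case snd F k of None \<Rightarrow> True | Some q \<Rightarrow> q \<notin> I) \<longrightarrow> diag (x ! (rank I k - 1))) \<and>
     (\<forall>k\<in>I. \<forall>q. snd F k = Some q \<longrightarrow> q \<in> I \<longrightarrow> prec (x ! (rank I q - 1)) (x ! (rank I k - 1)))"
proof -
  have img: "rank I ` I = {1..card I}" by (rule rank_image[OF assms])
  have allj: "(\<forall>j\<in>{1..card I}. R j) \<longleftrightarrow> (\<forall>k\<in>I. R (rank I k))" for R
    using img by (metis image_eqI imageE)
  have fst: "fst (restr F I) = card I" by (simp add: restr_def)
  have set: "length x = card I \<Longrightarrow> set x = (\<lambda>j. x ! (j - 1)) ` {1..card I}"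
  proof -
    assume l: "length x = card I"
    have "set x = (\<lambda>j. x ! j) ` {..<length x}" by (auto simp: in_set_conv_nth)
    also have "{..<length x} = (\<lambda>j. j - 1) ` {1..card I}"
    proof (intro equalityI subsetI)
      fix j assume "j \<in> {..<length x}"
      then show "j \<in> (\<lambda>j. j - 1) ` {1..card I}" using l by (intro image_eqI[where x="Suc j"]) auto
    next
      fix j assume "j \<in> (\<lambda>j. j - 1) ` {1..card I}"
      then show "j \<in> {..<length x}" using l by auto
    qed
    finally show ?thesis by (simp add: image_image)
  qed
  have L: "length x = card I \<Longrightarrow> (\<forall>y\<in>set x. letter y) \<longleftrightarrow> (\<forall>k\<in>I. letter (x ! (rank I k - 1)))"
  proof -
    assume l: "length x = card I"
    have "set x = (\<lambda>k. x ! (rank I k - 1)) ` I" using set[OF l] img[symmetric] by (simp add: image_image)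
    then show ?thesis by simp
  qed
  have R: "(\<forall>j\<in>{1..card I}. snd (restr F I) j = None \<longrightarrow> diag (x ! (j - 1))) \<longleftrightarrow>
     (\<forall>k\<in>I. (case snd F k of None \<Rightarrow> True | Some q \<Rightarrow> q \<notin> I) \<longrightarrow> diag (x ! (rank I k - 1)))"
    unfolding allj using restr_snd[OF assms] by (auto split: option.splits)
  have E: "(\<forall>j l. l \<in> {1..card I} \<longrightarrow> snd (restr F I) l = Some j \<longrightarrow> prec (x ! (j - 1)) (x ! (l - 1))) \<longleftrightarrow>
     (\<forall>k\<in>I. \<forall>q. snd F k = Some q \<longrightarrow> q \<in> I \<longrightarrow> prec (x ! (rank I q - 1)) (x ! (rank I k - 1)))" (is "_ \<longleftrightarrow> ?B")
  proof -
    have "(\<forall>j l. l \<in> {1..card I} \<longrightarrow> snd (restr F I) l = Some j \<longrightarrow> prec (x ! (j - 1)) (x ! (l - 1)))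
      \<longleftrightarrow> (\<forall>l\<in>{1..card I}. \<forall>j. snd (restr F I) l = Some j \<longrightarrow> prec (x ! (j - 1)) (x ! (l - 1)))" by blast
    also have "\<dots> \<longleftrightarrow> (\<forall>k\<in>I. \<forall>j. snd (restr F I) (rank I k) = Some j \<longrightarrow> prec (x ! (j - 1)) (x ! (rank I k - 1)))"
      by (rule allj)
    also have "\<dots> \<longleftrightarrow> ?B"
    proof (rule ball_cong[OF refl])
      fix k assume "k \<in> I"
      then show "(\<forall>j. snd (restr F I) (rank I k) = Some j \<longrightarrow> prec (x ! (j - 1)) (x ! (rank I k - 1))) \<longleftrightarrow>
        (\<forall>q. snd F k = Some q \<longrightarrow> q \<in> I \<longrightarrow> prec (x ! (rank I q - 1)) (x ! (rank I k - 1)))"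
        by (simp add: restr_snd[OF assms] split: option.splits)
    qed
    finally show ?thesis .
  qed
  show ?thesis unfolding compatible_def fst using L R E by blast
qed


lemma wf_parent:
  assumes "wf_forest F" "snd F k = Some q"
  shows "k \<in> {1..fst F}" "q \<in> {1..fst F}"
  using assms unfolding wf_forest_def by (metis option.distinct(1))+

lemma desc_trans: "descendant F a b \<Longrightarrow> descendant F b c \<Longrightarrow> descendant F a c"
  unfolding descendant_def by (rule trancl_trans)

lemma desc_edge: "snd F a = Some b \<Longrightarrow> descendant F a b"
  unfolding descendant_def edges_def by auto

lemma LV_closed: "snd F l = Some k \<Longrightarrow> k \<in> LV F V \<Longrightarrow> l \<in> LV F V"
  unfolding LV_def using desc_edge desc_trans by blast

lemma LV_sub:
  assumes "wf_forest F" "V \<subseteq> {1..fst F}" shows "LV F V \<subseteq> {1..fst F}"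
proof
  fix x assume "x \<in> LV F V"
  then consider "x \<in> V" | v where "descendant F x v" by (auto simp: LV_def)
  then show "x \<in> {1..fst F}"
  proof cases
    case 2
    then have "(x, v) \<in> (edges (snd F))\<^sup>+" by (simp add: descendant_def)
    then obtain y where "(x, y) \<in> edges (snd F)" by (meson tranclD)
    then show ?thesis using wf_parent[OF assms(1)] by (auto simp: edges_def)
  qed (use assms in auto)
qed

lemma desc_irrefl: "wf_forest F \<Longrightarrow> \<not> descendant F k k"
  unfolding wf_forest_def by auto

lemma LV_inj:
  assumes wf: "wf_forest F" and a: "admissible_cut F V" "admissible_cut F V'"
    and e: "LV F V = LV F V'"
  shows "V = V'"
proof -
  have ch: "V = {k \<in> LV F V. \<forall>x\<in>LV F V. \<not> descendant F k x}" if "admissible_cut F V" for V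
  proof (intro equalityI subsetI)
    fix k assume k: "k \<in> V"
    have "\<not> descendant F k x" if "x \<in> LV F V" for x
    proof
      assume d: "descendant F k x"
      from that consider "x \<in> V" | v where "v \<in> V" "descendant F x v" by (auto simp: LV_def)
      then show False
      proof cases
        case 1 then show False using d k \<open>admissible_cut F V\<close> desc_irrefl[OF wf]
          unfolding admissible_cut_def by metis
      next
        case 2
        then have "descendant F k v" using d desc_trans by blast
        then show False using 2 k \<open>admissible_cut F V\<close> desc_irrefl[OF wf]
          unfolding admissible_cut_def by metis
      qed
    qed
    then show "k \<in> {k \<in> LV F V. \<forall>x\<in>LV F V. \<not> descendant F k x}" using k by (auto simp: LV_def)
  next
    fix k assume "k \<in> {k \<in> LV F V. \<forall>x\<in>LV F V. \<not> descendant F k x}"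
    then show "k \<in> V" by (auto simp: LV_def)
  qed
  show ?thesis using ch[OF a(1)] ch[OF a(2)] e by simp
qed

lemma desc_closed:
  assumes cl: "\<forall>l k. snd F l = Some k \<longrightarrow> k \<in> P \<longrightarrow> l \<in> P"
    and d: "descendant F w v" and v: "v \<in> P"
  shows "w \<in> P"
proof -
  have "(w, v) \<in> (edges (snd F))\<^sup>+" using d by (simp add: descendant_def)
  then show ?thesis
  proof (induction rule: converse_trancl_induct)
    case (base y) then show ?case using cl v by (auto simp: edges_def)
  next
    case (step y z) then show ?case using cl by (auto simp: edges_def)
  qed
qed

lemma LV_exists:
  assumes wf: "wf_forest F" and P: "P \<subseteq> {1..fst F}"
    and cl: "\<forall>l k. snd F l = Some k \<longrightarrow> k \<in> P \<longrightarrow> l \<in> P"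
  shows "\<exists>V. admissible_cut F V \<and> LV F V = P"
proof -
  define V where "V = {k \<in> P. \<forall>q. snd F k = Some q \<longrightarrow> q \<notin> P}"
  have adm: "admissible_cut F V" unfolding admissible_cut_def
  proof (intro conjI ballI impI)
    show "V \<subseteq> {1..fst F}" using P by (auto simp: V_def)
  next
    fix v w assume v: "v \<in> V" and w: "w \<in> V" and "v \<noteq> w"
    show "\<not> descendant F w v"
    proof
      assume "descendant F w v"
      then have "(w, v) \<in> (edges (snd F))\<^sup>+" by (simp add: descendant_def)
      then obtain q where q: "(w, q) \<in> edges (snd F)" "(q, v) \<in> (edges (snd F))\<^sup>*" by (meson tranclD)
      have "q \<in> P"
      proof (cases "q = v")
        case True then show ?thesis using v by (simp add: V_def)
      next
        case False
        then have "descendant F q v" using q(2) by (simp add: descendant_def rtrancl_eq_or_trancl)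
        then show ?thesis using desc_closed[OF cl] v by (auto simp: V_def)
      qed
      moreover have "snd F w = Some q" using q(1) by (simp add: edges_def)
      ultimately show False using w by (auto simp: V_def)
    qed
  qed
  have "LV F V \<subseteq> P" unfolding LV_def using desc_closed[OF cl] by (auto simp: V_def)
  moreover have "P \<subseteq> LV F V"
  proof -
    let ?r = "edges (snd F)"
    have fin: "finite ?r"
      by (rule finite_subset[of _ "{1..fst F} \<times> {1..fst F}"]) (auto simp: edges_def dest: wf_parent[OF wf])
    have acy: "acyclic ?r" using wf unfolding wf_forest_def acyclic_def descendant_def by auto
    have wfr: "wf (?r\<inverse>)" using fin acy by (intro finite_acyclic_wf) auto
    have "k \<in> P \<longrightarrow> k \<in> LV F V" for k
    proof (induction k rule: wf_induct_rule[OF wfr])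
      case (1 k)
      show ?case
      proof
        assume kP: "k \<in> P"
        show "k \<in> LV F V"
        proof (cases "k \<in> V")
          case True then show ?thesis by (simp add: LV_def)
        next
          case False
          then obtain q where q: "snd F k = Some q" "q \<in> P" using kP by (auto simp: V_def)
          then have "q \<in> LV F V" using 1 by (auto simp: edges_def)
          then show ?thesis using LV_closed q(1) by blast
        qed
      qed
    qed
    then show ?thesis by blast
  qed
  ultimately show ?thesis using adm by blast
qed


definition build :: "nat \<Rightarrow> nat set \<Rightarrow> 'a list \<Rightarrow> 'b list \<Rightarrow> ('a + 'b) list" where
  "build n P u v = map (\<lambda>k. if k \<in> P then Inr (v ! (rank P k - 1))
      else Inl (u ! (rank ({1..n} - P) k - 1))) [1..<n+1]"

lemma length_build[simp]: "length (build n P u v) = n"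
  by (simp add: build_def)

lemma nth_build: "k \<in> {1..n} \<Longrightarrow> build n P u v ! (k - 1) = (if k \<in> P then Inr (v ! (rank P k - 1))
      else Inl (u ! (rank ({1..n} - P) k - 1)))"
  unfolding build_def by (subst nth_map) (auto simp del: upt_Suc)

lemma posset_isl_compl: "posset isl w = {1..length w} - posset (\<lambda>x. \<not> isl x) w"
  by (auto simp: posset_def)

lemma posset_build: "P \<subseteq> {1..n} \<Longrightarrow> posset (\<lambda>x. \<not> isl x) (build n P u v) = P"
  unfolding posset_def using nth_build[of _ n P u v] by (auto split: if_splits)

lemma filter_eqI:
  assumes "length z = card (posset Q w)"
    and "\<And>k. k \<in> posset Q w \<Longrightarrow> w ! (k - 1) = z ! (rank (posset Q w) k - 1)"
  shows "filter Q w = z"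
proof (rule nth_equalityI)
  show "length (filter Q w) = length z" using assms(1) length_filter_posset by metis
  fix j assume "j < length (filter Q w)"
  then have "Suc j \<in> {1..card (posset Q w)}" using length_filter_posset by (metis Suc_leI atLeastAtMost_iff le_add1 plus_1_eq_Suc)
  then obtain k where k: "k \<in> posset Q w" "Suc j = rank (posset Q w) k"
    using rank_image[of "posset Q w"] by (metis finite_posset imageE)
  then show "filter Q w ! j = z ! j" using nth_filter_posset[OF k(1)] assms(2)[OF k(1)]
    by (metis diff_Suc_1)
qed

lemma filters_build:
  assumes P: "P \<subseteq> {1..n}" and lv: "length v = card P" and lu: "length u = card ({1..n} - P)"
  shows "filter isl (build n P u v) = map Inl u" "filter (\<lambda>x. \<not> isl x) (build n P u v) = map Inr v"
proof -
  have pr: "posset (\<lambda>x. \<not> isl x) (build n P u v) = P" by (rule posset_build[OF P])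
  have pl: "posset isl (build n P u v) = {1..n} - P" using posset_isl_compl[of "build n P u v"] pr by simp
  have fC: "finite ({1..n} - P)" by simp
  have fP: "finite P" using P finite_subset by blast
  show "filter isl (build n P u v) = map Inl u"
  proof (rule filter_eqI)
    show "length (map Inl u) = card (posset isl (build n P u v))" using pl lu by simp
    fix k assume "k \<in> posset isl (build n P u v)"
    then have k: "k \<in> {1..n} - P" using pl by simp
    then show "build n P u v ! (k - 1) = map Inl u ! (rank (posset isl (build n P u v)) k - 1)"
      using nth_build[of k n P u v] rank_bounds[OF fC k] pl lu by auto
  qed
  show "filter (\<lambda>x. \<not> isl x) (build n P u v) = map Inr v"
  proof (rule filter_eqI)
    show "length (map Inr v) = card (posset (\<lambda>x. \<not> isl x) (build n P u v))" using pr lv by simp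
    fix k assume "k \<in> posset (\<lambda>x. \<not> isl x) (build n P u v)"
    then have k: "k \<in> P" using pr by simp
    then show "build n P u v ! (k - 1) = map Inr v ! (rank (posset (\<lambda>x. \<not> isl x) (build n P u v)) k - 1)"
      using nth_build[of k n P u v] rank_bounds[OF fP k] pr lv P by auto
  qed
qed

lemma build_eq:
  assumes fl: "filter isl w = map Inl u" and fr: "filter (\<lambda>x. \<not> isl x) w = map Inr v"
  shows "w = build (length w) (posset (\<lambda>x. \<not> isl x) w) u v"
proof (rule nth_equalityI)
  show "length w = length (build (length w) (posset (\<lambda>x. \<not> isl x) w) u v)" by simp
  fix i assume i: "i < length w"
  define P where "P = posset (\<lambda>x. \<not> isl x) w"
  have C: "posset isl w = {1..length w} - P" using posset_isl_compl P_def by simp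
  have k: "Suc i \<in> {1..length w}" using i by simp
  show "w ! i = build (length w) (posset (\<lambda>x. \<not> isl x) w) u v ! i"
  proof (cases "Suc i \<in> P")
    case True
    have "w ! i = filter (\<lambda>x. \<not> isl x) w ! (rank P (Suc i) - 1)"
      using nth_filter_posset[of "Suc i" "\<lambda>x. \<not> isl x" w] True by (simp add: P_def)
    moreover have "rank P (Suc i) - 1 < length v"
      using rank_bounds[of P "Suc i"] True length_filter_posset[of "\<lambda>x. \<not> isl x" w] fr
      by (simp add: P_def)
    ultimately show ?thesis using nth_build[OF k, of P u v] True fr by (simp add: P_def)
  next
    case False
    then have F: "Suc i \<in> posset isl w" using C k by simp
    have "w ! i = filter isl w ! (rank (posset isl w) (Suc i) - 1)"
      using nth_filter_posset[OF F] by simp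
    moreover have "rank (posset isl w) (Suc i) - 1 < length u"
      using rank_bounds[OF finite_posset F] length_filter_posset[of isl w] fl by simp
    ultimately show ?thesis using nth_build[OF k, of P u v] False fl C by (simp add: P_def)
  qed
qed


lemma ball_set_nth: "(\<forall>x\<in>set w. R x) \<longleftrightarrow> (\<forall>k\<in>{1..length w}. R (w ! (k - 1)))"
proof
  assume h: "\<forall>x\<in>set w. R x"
  show "\<forall>k\<in>{1..length w}. R (w ! (k - 1))"
  proof
    fix k assume "k \<in> {1..length w}"
    then have "k - 1 < length w" by auto
    then show "R (w ! (k - 1))" using h nth_mem by blast
  qed
next
  assume h: "\<forall>k\<in>{1..length w}. R (w ! (k - 1))"
  show "\<forall>x\<in>set w. R x"
  proof
    fix x assume "x \<in> set w"
    then obtain i where "i < length w" "x = w ! i" by (auto simp: in_set_conv_nth)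
    then show "R x" using h[rule_format, of "Suc i"] by simp
  qed
qed

lemma main_equiv:
  assumes wf: "wf_forest F" and P: "P \<subseteq> {1..fst F}"
    and cl: "\<forall>l k. snd F l = Some k \<longrightarrow> k \<in> P \<longrightarrow> l \<in> P"
    and lw: "length w = fst F" and Pw: "P = posset (\<lambda>x. \<not> isl x) w"
    and fl: "filter isl w = map Inl u" and fr: "filter (\<lambda>x. \<not> isl x) w = map Inr v"
  shows "compatible letterAB diagAB precAB F w \<longleftrightarrow>
     compatible letterA diagA precA (restr F ({1..fst F} - P)) u \<and> compatible letterA diagA precA (restr F P) v"
proof -
  define n where "n = fst F"
  define p where "p = snd F"
  define C where "C = {1..n} - P"
  define a where "a k = u ! (rank C k - 1)" for k
  define b where "b k = v ! (rank P k - 1)" for k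
  have fP: "finite P" using P finite_subset by blast
  have fC: "finite C" by (simp add: C_def)
  have W: "w ! (k - 1) = (if k \<in> P then Inr (b k) else Inl (a k))" if "k \<in> {1..n}" for k
    using build_eq[OF fl fr] nth_build[of k n P u v] that lw Pw
    by (simp add: a_def b_def C_def n_def)
  have Cw: "posset isl w = C" using posset_isl_compl[of w] Pw lw by (simp add: C_def n_def)
  have lu: "length u = card C" using length_filter_posset[of isl w] fl Cw by simp
  have lv: "length v = card P" using length_filter_posset[of "\<lambda>x. \<not> isl x" w] fr Pw by simp
  have par: "k \<in> {1..n}" "q \<in> {1..n}" if "p k = Some q" for k q
    using wf_parent[OF wf] that by (auto simp: n_def p_def)
  have cl': "l \<in> P" if "p l = Some k" "k \<in> P" for l k using cl that by (auto simp: p_def)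
  have un: "{1..n} = C \<union> P" using P by (auto simp: C_def n_def)
  have nP: "k \<notin> P" if "k \<in> C" for k using that by (simp add: C_def)
  have WW: "(\<forall>k\<in>{1..n}. R k (w ! (k - 1))) \<longleftrightarrow> (\<forall>k\<in>C. R k (Inl (a k))) \<and> (\<forall>k\<in>P. R k (Inr (b k)))" for R
  proof -
    have "(\<forall>k\<in>{1..n}. R k (w ! (k - 1))) \<longleftrightarrow> (\<forall>k\<in>C \<union> P. R k (if k \<in> P then Inr (b k) else Inl (a k)))"
      unfolding un[symmetric] using W by simp
    also have "\<dots> \<longleftrightarrow> (\<forall>k\<in>C. R k (Inl (a k))) \<and> (\<forall>k\<in>P. R k (Inr (b k)))"
      using nP by (auto simp: ball_Un)
    finally show ?thesis .
  qed
  have L1: "(\<forall>x\<in>set w. letterAB x) \<longleftrightarrow> (\<forall>k\<in>C. letterA (a k)) \<and> (\<forall>k\<in>P. letterA (b k))"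
    unfolding ball_set_nth lw n_def[symmetric] using WW[of "\<lambda>k x. letterAB x"] by simp
  have L2: "(\<forall>k\<in>{1..n}. p k = None \<longrightarrow> diagAB (w ! (k - 1))) \<longleftrightarrow>
      (\<forall>k\<in>C. p k = None \<longrightarrow> diagA (a k)) \<and> (\<forall>k\<in>P. p k = None \<longrightarrow> diagA (b k))"
    using WW[of "\<lambda>k x. p k = None \<longrightarrow> diagAB x"] by simp
  have L3: "(\<forall>k l. l \<in> {1..n} \<longrightarrow> p l = Some k \<longrightarrow> precAB (w ! (k - 1)) (w ! (l - 1))) \<longleftrightarrow>
     (\<forall>k\<in>C. \<forall>q. p k = Some q \<longrightarrow> q \<in> C \<longrightarrow> precA (a q) (a k)) \<and>
     (\<forall>k\<in>P. \<forall>q. p k = Some q \<longrightarrow> q \<in> P \<longrightarrow> precA (b q) (b k)) \<and>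
     (\<forall>k\<in>P. \<forall>q. p k = Some q \<longrightarrow> q \<notin> P \<longrightarrow> diagA (b k))" (is "_ \<longleftrightarrow> ?R")
  proof -
    have E: "precAB (w ! (k - 1)) z = precAB (if k \<in> P then Inr (b k) else Inl (a k)) z"
      if "p l = Some k" for l k z using W[OF par(2)[OF that]] by simp
    have "(\<forall>k l. l \<in> {1..n} \<longrightarrow> p l = Some k \<longrightarrow> precAB (w ! (k - 1)) (w ! (l - 1))) \<longleftrightarrow>
      (\<forall>l\<in>{1..n}. \<forall>k. p l = Some k \<longrightarrow> precAB (if k \<in> P then Inr (b k) else Inl (a k)) (w ! (l - 1)))"
      using E by blast
    also have "\<dots> \<longleftrightarrow> (\<forall>l\<in>C. \<forall>k. p l = Some k \<longrightarrow> precAB (if k \<in> P then Inr (b k) else Inl (a k)) (Inl (a l)))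
       \<and> (\<forall>l\<in>P. \<forall>k. p l = Some k \<longrightarrow> precAB (if k \<in> P then Inr (b k) else Inl (a k)) (Inr (b l)))"
      by (rule WW)
    also have "\<dots> \<longleftrightarrow> ?R"
    proof -
      have mem: "q \<in> C" if "q \<in> {1..n}" "q \<notin> P" for q using that by (simp add: C_def)
      have c1: "(\<forall>l\<in>C. \<forall>k. p l = Some k \<longrightarrow> precAB (if k \<in> P then Inr (b k) else Inl (a k)) (Inl (a l)))
         \<longleftrightarrow> (\<forall>k\<in>C. \<forall>q. p k = Some q \<longrightarrow> q \<in> C \<longrightarrow> precA (a q) (a k))"
        using nP cl' par mem by fastforce
      have c2: "(\<forall>l\<in>P. \<forall>k. p l = Some k \<longrightarrow> precAB (if k \<in> P then Inr (b k) else Inl (a k)) (Inr (b l)))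
         \<longleftrightarrow> (\<forall>k\<in>P. \<forall>q. p k = Some q \<longrightarrow> q \<in> P \<longrightarrow> precA (b q) (b k)) \<and>
     (\<forall>k\<in>P. \<forall>q. p k = Some q \<longrightarrow> q \<notin> P \<longrightarrow> diagA (b k))"
        by auto
      show ?thesis using c1 c2 by blast
    qed
    finally show ?thesis .
  qed
  have mem: "q \<in> C" if "q \<in> {1..n}" "q \<notin> P" for q using that by (simp add: C_def)
  have rootC: "(case p k of None \<Rightarrow> True | Some q \<Rightarrow> q \<notin> C) \<longleftrightarrow> p k = None" if "k \<in> C" for k
  proof (cases "p k")
    case (Some q)
    then have "q \<in> {1..n}" by (rule par(2))
    moreover have "q \<notin> P" using cl' Some that nP by blast
    ultimately have "q \<in> C" using mem by blast
    then show ?thesis using Some by simp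
  qed simp
  have RC: "compatible letterA diagA precA (restr F C) u \<longleftrightarrow> (\<forall>k\<in>C. letterA (a k)) \<and>
     (\<forall>k\<in>C. p k = None \<longrightarrow> diagA (a k)) \<and> (\<forall>k\<in>C. \<forall>q. p k = Some q \<longrightarrow> q \<in> C \<longrightarrow> precA (a q) (a k))"
    unfolding compat_restr[OF fC] a_def[symmetric] p_def[symmetric] using lu rootC by auto
  have RP: "compatible letterA diagA precA (restr F P) v \<longleftrightarrow> (\<forall>k\<in>P. letterA (b k)) \<and>
     (\<forall>k\<in>P. p k = None \<longrightarrow> diagA (b k)) \<and> (\<forall>k\<in>P. \<forall>q. p k = Some q \<longrightarrow> q \<in> P \<longrightarrow> precA (b q) (b k))
     \<and> (\<forall>k\<in>P. \<forall>q. p k = Some q \<longrightarrow> q \<notin> P \<longrightarrow> diagA (b k))"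
    unfolding compat_restr[OF fP] b_def[symmetric] p_def[symmetric] using lv by (auto split: option.splits)
  have LF: "compatible letterAB diagAB precAB F w \<longleftrightarrow> (\<forall>x\<in>set w. letterAB x) \<and>
     (\<forall>k\<in>{1..n}. p k = None \<longrightarrow> diagAB (w ! (k - 1))) \<and>
     (\<forall>k l. l \<in> {1..n} \<longrightarrow> p l = Some k \<longrightarrow> precAB (w ! (k - 1)) (w ! (l - 1)))"
    unfolding compatible_def n_def p_def using lw by simp
  show ?thesis unfolding LF L1 L2 L3 C_def[symmetric] n_def[symmetric] RC RP by blast
qed


lemma mem_shuffles_iff:
  "w \<in> shuffles (map Inl u) (map Inr v) \<longleftrightarrow>
     filter isl w = map Inl u \<and> filter (\<lambda>x. \<not> isl x) w = map Inr v"
proof -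
  have "shuffles (map Inl u) (map Inr v) = partition isl -` {(map Inl u, map Inr v)}"
    by (rule inv_image_partition[symmetric]) auto
  then show ?thesis by (simp add: o_def)
qed

lemma sum_indicator: "finite A \<Longrightarrow> (\<Sum>x\<in>A. (if P x then 1 else 0 :: nat)) = card {x \<in> A. P x}"
  by (simp add: sum.inter_filter[symmetric])

lemma closed_of_compat:
  assumes wf: "wf_forest F" and c: "compatible letterAB diagAB precAB F w"
  shows "\<forall>l k. snd F l = Some k \<longrightarrow> k \<in> posset (\<lambda>x. \<not> isl x) w \<longrightarrow> l \<in> posset (\<lambda>x. \<not> isl x) w"
proof (intro allI impI)
  fix l k assume e: "snd F l = Some k" and k: "k \<in> posset (\<lambda>x. \<not> isl x) w"
  have lw: "length w = fst F" using c by (simp add: compatible_def)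
  have l1: "l \<in> {1..fst F}" using wf_parent[OF wf e] by simp
  have pr: "precAB (w ! (k - 1)) (w ! (l - 1))" using c e l1 by (simp add: compatible_def)
  show "l \<in> posset (\<lambda>x. \<not> isl x) w"
  proof (rule ccontr)
    assume "l \<notin> posset (\<lambda>x. \<not> isl x) w"
    then have "isl (w ! (l - 1))" using l1 lw by (auto simp: posset_def)
    moreover have "\<not> isl (w ! (k - 1))" using k by (simp add: posset_def)
    ultimately show False using pr by (cases "w ! (l - 1)"; cases "w ! (k - 1)") auto
  qed
qed

lemma part2:
  assumes wf: "wf_forest F"
  shows "(\<Sum>w\<in>shuffles (map Inl u) (map Inr v). SAB F w) =
         (\<Sum>V\<in>{V. admissible_cut F V}. SA (Roo F V) u * SA (Lea F V) v)"
proof -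
  define n where "n = fst F"
  define Sh where "Sh = shuffles (map Inl u) (map Inr v)"
  define A where "A = {w \<in> Sh. compatible letterAB diagAB precAB F w}"
  define B where "B = {V \<in> {V. admissible_cut F V}. compatible letterA diagA precA (Roo F V) u
                  \<and> compatible letterA diagA precA (Lea F V) v}"
  define mk where "mk V = build n (LV F V) u v" for V
  have finV: "finite {V. admissible_cut F V}"
    by (rule finite_subset[of _ "Pow {1..fst F}"]) (auto simp: admissible_cut_def)
  have L: "(\<Sum>w\<in>Sh. SAB F w) = card A"
    unfolding SAB_def A_def Sh_def by (rule sum_indicator) simp
  have R: "(\<Sum>V\<in>{V. admissible_cut F V}. SA (Roo F V) u * SA (Lea F V) v) = card B"
  proof -
    have "(\<Sum>V\<in>{V. admissible_cut F V}. SA (Roo F V) u * SA (Lea F V) v) =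
      (\<Sum>V\<in>{V. admissible_cut F V}. if compatible letterA diagA precA (Roo F V) u
                  \<and> compatible letterA diagA precA (Lea F V) v then 1 else 0)"
      by (intro sum.cong) (auto simp: SA_def)
    then show ?thesis unfolding B_def using sum_indicator[OF finV] by simp
  qed
  have img_in: "mk V \<in> A" if V: "V \<in> B" for V
  proof -
    define P where "P = LV F V"
    have adm: "admissible_cut F V" and cR: "compatible letterA diagA precA (restr F ({1..n} - P)) u"
      and cL: "compatible letterA diagA precA (restr F P) v"
      using V by (auto simp: B_def Roo_def Lea_def P_def n_def)
    have Psub: "P \<subseteq> {1..n}" using LV_sub[OF wf] adm by (auto simp: admissible_cut_def P_def n_def)
    have cl: "\<forall>l k. snd F l = Some k \<longrightarrow> k \<in> P \<longrightarrow> l \<in> P" using LV_closed P_def by blast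
    have lu: "length u = card ({1..n} - P)" using cR by (simp add: compatible_def restr_def)
    have lv: "length v = card P" using cL by (simp add: compatible_def restr_def)
    have fl: "filter isl (mk V) = map Inl u" "filter (\<lambda>x. \<not> isl x) (mk V) = map Inr v"
      using filters_build[OF Psub lv lu] by (simp_all add: mk_def P_def)
    have ps: "P = posset (\<lambda>x. \<not> isl x) (mk V)" using posset_build[OF Psub, of u v] by (simp add: mk_def P_def)
    have "compatible letterAB diagAB precAB F (mk V)"
      using main_equiv[OF wf Psub[unfolded n_def] cl _ ps fl] cR cL by (simp add: mk_def n_def)
    then show ?thesis using fl by (simp add: A_def Sh_def mem_shuffles_iff)
  qed
  have inj: "inj_on mk B"
  proof (rule inj_onI)
    fix V V' assume "V \<in> B" "V' \<in> B" "mk V = mk V'"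
    moreover have "LV F V \<subseteq> {1..n}" "LV F V' \<subseteq> {1..n}" using \<open>V \<in> B\<close> \<open>V' \<in> B\<close> LV_sub[OF wf]
      by (auto simp: B_def admissible_cut_def n_def)
    ultimately have "LV F V = LV F V'" using posset_build unfolding mk_def by metis
    then show "V = V'" using LV_inj[OF wf] \<open>V \<in> B\<close> \<open>V' \<in> B\<close> by (auto simp: B_def)
  qed
  have surj: "A \<subseteq> mk ` B"
  proof
    fix w assume w: "w \<in> A"
    then have c: "compatible letterAB diagAB precAB F w" and fl: "filter isl w = map Inl u"
      and fr: "filter (\<lambda>x. \<not> isl x) w = map Inr v" by (auto simp: A_def Sh_def mem_shuffles_iff)
    define P where "P = posset (\<lambda>x. \<not> isl x) w"
    have lw: "length w = n" using c by (simp add: compatible_def n_def)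
    have Psub: "P \<subseteq> {1..fst F}" using lw by (auto simp: P_def posset_def n_def)
    have cl: "\<forall>l k. snd F l = Some k \<longrightarrow> k \<in> P \<longrightarrow> l \<in> P" using closed_of_compat[OF wf c] by (simp add: P_def)
    obtain V where adm: "admissible_cut F V" and LP: "LV F V = P" using LV_exists[OF wf Psub cl] by blast
    have "compatible letterA diagA precA (restr F ({1..fst F} - P)) u \<and> compatible letterA diagA precA (restr F P) v"
      using main_equiv[OF wf Psub cl _ P_def fl fr] c lw by (simp add: n_def)
    then have "V \<in> B" using adm LP by (simp add: B_def Roo_def Lea_def)
    moreover have "w = mk V" using build_eq[OF fl fr] lw LP by (simp add: mk_def P_def)
    ultimately show "w \<in> mk ` B" by blast
  qed
  have "bij_betw mk B A" using inj img_in surj by (auto simp: bij_betw_def)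
  then have "card B = card A" by (rule bij_betw_same_card)
  then show ?thesis using L R by (simp add: Sh_def)
qed


lemma ball_split: "(\<forall>k\<in>{1..n+m}. R k) \<longleftrightarrow> (\<forall>k\<in>{1..n}. R k) \<and> (\<forall>j\<in>{1..m}. R (j + (n::nat)))"
proof
  assume "\<forall>k\<in>{1..n+m}. R k" then show "(\<forall>k\<in>{1..n}. R k) \<and> (\<forall>j\<in>{1..m}. R (j + n))" by auto
next
  assume h: "(\<forall>k\<in>{1..n}. R k) \<and> (\<forall>j\<in>{1..m}. R (j + n))"
  show "\<forall>k\<in>{1..n+m}. R k"
  proof
    fix k assume k: "k \<in> {1..n+m}"
    show "R k"
    proof (cases "k \<le> n")
      case True then show ?thesis using h k by auto
    next
      case False
      then have "k - n \<in> {1..m}" "k = (k - n) + n" using k by auto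
      then show ?thesis using h by metis
    qed
  qed
qed

lemma compat_fprod:
  assumes wfF: "wf_forest F" and wfG: "wf_forest G" and lw: "length w = fst F + fst G"
  shows "compatible letter diag prec (fprod F G) w \<longleftrightarrow>
    compatible letter diag prec F (take (fst F) w) \<and> compatible letter diag prec G (drop (fst F) w)"
proof -
  define n where "n = fst F"
  define m where "m = fst G"
  define x where "x = take n w"
  define y where "y = drop n w"
  have lx: "length x = n" and ly: "length y = m" using lw by (simp_all add: x_def y_def n_def m_def)
  have wx: "w ! (k - 1) = x ! (k - 1)" if "k \<in> {1..n}" for k using that lw unfolding x_def n_def by (subst nth_take) auto
  have wy: "w ! (j + n - 1) = y ! (j - 1)" if "j \<in> {1..m}" for j using that lw
    by (simp add: y_def n_def m_def) (metis Nat.add_diff_assoc2 add.commute)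
  have pf1: "snd (fprod F G) k = snd F k" if "k \<in> {1..n}" for k using that by (simp add: fprod_def n_def)
  have pf2: "snd (fprod F G) (j + n) = map_option (\<lambda>q. q + n) (snd G j)" if "j \<in> {1..m}" for j
    using that by (simp add: fprod_def n_def)
  have parF: "k \<in> {1..n}" if "snd F l = Some k" for l k using wf_parent[OF wfF that] by (simp add: n_def)
  have parG: "k \<in> {1..m}" if "snd G l = Some k" for l k using wf_parent[OF wfG that] by (simp add: m_def)
  have S: "set w = set x \<union> set y" by (metis append_take_drop_id set_append x_def y_def)
  have R: "(\<forall>k\<in>{1..n+m}. snd (fprod F G) k = None \<longrightarrow> diag (w ! (k - 1))) \<longleftrightarrow>
    (\<forall>k\<in>{1..n}. snd F k = None \<longrightarrow> diag (x ! (k - 1))) \<and> (\<forall>j\<in>{1..m}. snd G j = None \<longrightarrow> diag (y ! (j - 1)))"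
    unfolding ball_split using wx wy pf1 pf2 by simp
  have E: "(\<forall>k l. l \<in> {1..n+m} \<longrightarrow> snd (fprod F G) l = Some k \<longrightarrow> prec (w ! (k - 1)) (w ! (l - 1))) \<longleftrightarrow>
    (\<forall>k l. l \<in> {1..n} \<longrightarrow> snd F l = Some k \<longrightarrow> prec (x ! (k - 1)) (x ! (l - 1))) \<and>
    (\<forall>k l. l \<in> {1..m} \<longrightarrow> snd G l = Some k \<longrightarrow> prec (y ! (k - 1)) (y ! (l - 1)))"
  proof -
    have "(\<forall>k l. l \<in> {1..n+m} \<longrightarrow> snd (fprod F G) l = Some k \<longrightarrow> prec (w ! (k - 1)) (w ! (l - 1))) \<longleftrightarrow>
      (\<forall>l\<in>{1..n+m}. \<forall>k. snd (fprod F G) l = Some k \<longrightarrow> prec (w ! (k - 1)) (w ! (l - 1)))" by blast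
    also have "\<dots> \<longleftrightarrow> (\<forall>l\<in>{1..n}. \<forall>k. snd F l = Some k \<longrightarrow> prec (x ! (k - 1)) (x ! (l - 1))) \<and>
       (\<forall>l\<in>{1..m}. \<forall>k. snd G l = Some k \<longrightarrow> prec (y ! (k - 1)) (y ! (l - 1)))"
    proof -
      have a: "(\<forall>k. snd (fprod F G) l = Some k \<longrightarrow> prec (w ! (k - 1)) (w ! (l - 1))) \<longleftrightarrow>
        (\<forall>k. snd F l = Some k \<longrightarrow> prec (x ! (k - 1)) (x ! (l - 1)))" if l: "l \<in> {1..n}" for l
        using pf1[OF l] wx[OF l] wx parF by auto
      have b: "(\<forall>k. snd (fprod F G) (l + n) = Some k \<longrightarrow> prec (w ! (k - 1)) (w ! (l + n - 1))) \<longleftrightarrow>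
        (\<forall>k. snd G l = Some k \<longrightarrow> prec (y ! (k - 1)) (y ! (l - 1)))" if l: "l \<in> {1..m}" for l
        using pf2[OF l] wy[OF l] wy parG by auto
      show ?thesis unfolding ball_split using a b by simp
    qed
    finally show ?thesis by blast
  qed
  have fp: "fst (fprod F G) = n + m" by (simp add: fprod_def n_def m_def)
  have cF: "compatible letter diag prec F x \<longleftrightarrow> (\<forall>z\<in>set x. letter z) \<and>
     (\<forall>k\<in>{1..n}. snd F k = None \<longrightarrow> diag (x ! (k - 1))) \<and>
     (\<forall>k l. l \<in> {1..n} \<longrightarrow> snd F l = Some k \<longrightarrow> prec (x ! (k - 1)) (x ! (l - 1)))"
    unfolding compatible_def n_def[symmetric] using lx by simp
  have cG: "compatible letter diag prec G y \<longleftrightarrow> (\<forall>z\<in>set y. letter z) \<and>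
     (\<forall>k\<in>{1..m}. snd G k = None \<longrightarrow> diag (y ! (k - 1))) \<and>
     (\<forall>k l. l \<in> {1..m} \<longrightarrow> snd G l = Some k \<longrightarrow> prec (y ! (k - 1)) (y ! (l - 1)))"
    unfolding compatible_def m_def[symmetric] using ly by simp
  have cFG: "compatible letter diag prec (fprod F G) w \<longleftrightarrow> (\<forall>z\<in>set w. letter z) \<and>
     (\<forall>k\<in>{1..n+m}. snd (fprod F G) k = None \<longrightarrow> diag (w ! (k - 1))) \<and>
     (\<forall>k l. l \<in> {1..n+m} \<longrightarrow> snd (fprod F G) l = Some k \<longrightarrow> prec (w ! (k - 1)) (w ! (l - 1)))"
    unfolding compatible_def fp using lw by (simp add: n_def m_def)
  show ?thesis unfolding cFG cF[unfolded x_def] cG[unfolded y_def] R[unfolded x_def y_def] E[unfolded x_def y_def] S[unfolded x_def y_def] n_def[symmetric]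
    by blast
qed

lemma part1:
  assumes wfF: "wf_forest F" and wfG: "wf_forest G"
  shows "ser_mult (SA F) (SA G) = SA (fprod F G)"
proof
  fix w :: "(nat \<times> nat) list"
  define n where "n = fst F"
  define f where "f k = SA F (take k w) * SA G (drop k w)" for k
  have "f k = (if k = n then f n else 0)" if "k \<in> {..length w}" for k
    using that by (auto simp: f_def SA_def compatible_def n_def)
  then have "ser_mult (SA F) (SA G) w = (\<Sum>k\<in>{..length w}. if k = n then f n else 0)"
    unfolding ser_mult_def f_def[symmetric] by (intro sum.cong) auto
  also have "\<dots> = (if n \<le> length w then f n else 0)" by (simp add: sum.delta)
  also have "\<dots> = SA (fprod F G) w"
  proof (cases "length w = fst F + fst G")
    case True
    then show ?thesis using compat_fprod[OF wfF wfG True] by (simp add: f_def SA_def n_def)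
  next
    case False
    then have "\<not> compatible letterA diagA precA (fprod F G) w" by (simp add: compatible_def fprod_def)
    moreover have "f n = 0" using False by (auto simp: f_def SA_def compatible_def n_def)
    ultimately show ?thesis by (simp add: SA_def)
  qed
  finally show "ser_mult (SA F) (SA G) w = SA (fprod F G) w" .
qed

theorem mainTheorem3:
  shows "(\<forall>F G. wf_forest F \<longrightarrow> wf_forest G \<longrightarrow>
            ser_mult (SA F) (SA G) = SA (fprod F G))
       \<and> (\<forall>F. wf_forest F \<longrightarrow> (\<forall>u v.
            (\<Sum>w\<in>shuffles (map Inl u) (map Inr v). SAB F w) =
            (\<Sum>V\<in>{V. admissible_cut F V}. SA (Roo F V) u * SA (Lea F V) v)))"
  using part1 part2 by blast

end
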